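(* Let $G=(V,E,w)$ be a connected weighted graph with $n$ vertices. Then $$ n\sum_{e\in E} w_e B_e^{2}=R_{\mathrm{tot}}. $$
   Context: $G=(V,E,w)$ is an undirected graph with positive edge weights $w_e$ and Laplacian $L=D-A$ (weighted degree matrix minus weighted adjacency matrix); $L^{+}$ is its Moore–Penrose pseudoinverse, $L^{2+}=(L^+)^2$, and $1_v$ is the indicator vector of vertex $v$. The effective resistance is $R_{st}=(1_s-1_t)^{T}L^{+}(1_s-1_t)$ and the total resistance is $R_{\mathrm{tot}}=\sum_{\{s,t\}\subseteq V}R_{st}$, summed over unordered pairs of distinct vertices. The biharmonic distance is $B_{st}=\sqrt{(1_s-1_t)^{T}L^{2+}(1_s-1_t)}$, and $B_e:=B_{st}$ for an edge $e=\{s,t\}$. *)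

theory Defs
  imports "HOL-Analysis.Analysis"
begin

definition wgraph :: "'v set set \<Rightarrow> ('v set \<Rightarrow> real) \<Rightarrow> bool" where
  "wgraph E w \<longleftrightarrow> (\<forall>e\<in>E. \<exists>s t. s \<noteq> t \<and> e = {s, t}) \<and> (\<forall>e\<in>E. w e > 0)"

definition connected_graph :: "'v set set \<Rightarrow> bool" where
  "connected_graph E \<longleftrightarrow> (\<forall>s t. (\<lambda>x y. {x, y} \<in> E)\<^sup>*\<^sup>* s t)"

definition adj_matrix :: "('v::finite) set set \<Rightarrow> ('v set \<Rightarrow> real) \<Rightarrow> real^'v^'v" where
  "adj_matrix E w = (\<chi> i j. if {i, j} \<in> E then w {i, j} else 0)"

definition laplacian :: "('v::finite) set set \<Rightarrow> ('v set \<Rightarrow> real) \<Rightarrow> real^'v^'v" where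
  "laplacian E w =
     (\<chi> i j. (if i = j then (\<Sum>k\<in>UNIV. adj_matrix E w $ i $ k) else 0) - adj_matrix E w $ i $ j)"

definition pinv :: "real^'n^'n \<Rightarrow> real^'n^'n" where
  "pinv A = (THE X. A ** X ** A = A \<and> X ** A ** X = X \<and>
                    transpose (A ** X) = A ** X \<and> transpose (X ** A) = X ** A)"

definition indicator_vec :: "'v::finite \<Rightarrow> real^'v" where
  "indicator_vec v = axis v 1"

definition qform_pair :: "real^'v^'v \<Rightarrow> 'v::finite \<Rightarrow> 'v \<Rightarrow> real" where
  "qform_pair M s t = (indicator_vec s - indicator_vec t) \<bullet> (M *v (indicator_vec s - indicator_vec t))"

definition eff_res :: "('v::finite) set set \<Rightarrow> ('v set \<Rightarrow> real) \<Rightarrow> 'v \<Rightarrow> 'v \<Rightarrow> real" where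
  "eff_res E w s t = qform_pair (pinv (laplacian E w)) s t"

definition biharm :: "('v::finite) set set \<Rightarrow> ('v set \<Rightarrow> real) \<Rightarrow> 'v \<Rightarrow> 'v \<Rightarrow> real" where
  "biharm E w s t = sqrt (qform_pair (pinv (laplacian E w) ** pinv (laplacian E w)) s t)"

text \<open>Endpoints of an unordered pair (both quantities used are symmetric in s,t).\<close>
definition endpoints :: "'v set \<Rightarrow> 'v \<times> 'v" where
  "endpoints e = (SOME p. fst p \<noteq> snd p \<and> e = {fst p, snd p})"

definition biharm_edge :: "('v::finite) set set \<Rightarrow> ('v set \<Rightarrow> real) \<Rightarrow> 'v set \<Rightarrow> real" where
  "biharm_edge E w e = biharm E w (fst (endpoints e)) (snd (endpoints e))"

definition total_res :: "('v::finite) set set \<Rightarrow> ('v set \<Rightarrow> real) \<Rightarrow> real" where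
  "total_res E w = (\<Sum>p\<in>{{s, t} | s t. s \<noteq> t}. eff_res E w (fst (endpoints p)) (snd (endpoints p)))"

end

theory Submission
  imports Defs
begin


definition penrose :: "real^'n^'n \<Rightarrow> real^'n^'n \<Rightarrow> bool" where
  "penrose A X \<longleftrightarrow> A ** X ** A = A \<and> X ** A ** X = X \<and>
                    transpose (A ** X) = A ** X \<and> transpose (X ** A) = X ** A"

lemma penrose_unique:
  fixes A X Y :: "real^'n^'n"
  assumes "penrose A X" "penrose A Y" shows "X = Y"
proof -
  have x1: "A ** X ** A = A" "X ** A ** X = X" "transpose (A ** X) = A ** X" "transpose (X ** A) = X ** A"
    using assms(1) unfolding penrose_def by auto
  have y1: "A ** Y ** A = A" "Y ** A ** Y = Y" "transpose (A ** Y) = A ** Y" "transpose (Y ** A) = Y ** A"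
    using assms(2) unfolding penrose_def by auto
  have tA: "transpose A = transpose A ** transpose Y ** transpose A"
    by (metis y1(1) matrix_transpose_mul matrix_mul_assoc)
  have tA2: "transpose A = transpose A ** transpose X ** transpose A"
    by (metis x1(1) matrix_transpose_mul matrix_mul_assoc)
  have "X = X ** transpose X ** transpose A"
    by (metis x1(2) x1(3) matrix_transpose_mul matrix_mul_assoc)
  also have "\<dots> = X ** (transpose X ** transpose A) ** (transpose Y ** transpose A)"
    by (metis tA matrix_mul_assoc)
  also have "\<dots> = X ** (A ** X) ** (A ** Y)"
    by (metis x1(3) y1(3) matrix_transpose_mul)
  also have "\<dots> = X ** A ** Y"
    by (metis x1(2) matrix_mul_assoc)
  finally have X: "X = X ** A ** Y" .
  have "Y = transpose A ** transpose Y ** Y"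
    by (metis y1(2) y1(4) matrix_transpose_mul matrix_mul_assoc)
  also have "\<dots> = (transpose A ** transpose X) ** (transpose A ** transpose Y) ** Y"
    by (metis tA2 matrix_mul_assoc)
  also have "\<dots> = (X ** A) ** (Y ** A) ** Y"
    by (metis x1(4) y1(4) matrix_transpose_mul)
  also have "\<dots> = X ** A ** Y"
    by (metis y1(2) matrix_mul_assoc)
  finally have Y: "Y = X ** A ** Y" .
  show ?thesis using X Y by (rule trans[OF _ sym])
qed

lemma pinv_eq:
  assumes "penrose A X" shows "pinv A = X"
  unfolding pinv_def
proof (rule the_equality)
  show "A ** X ** A = A \<and> X ** A ** X = X \<and> transpose (A ** X) = A ** X \<and> transpose (X ** A) = X ** A"
    using assms unfolding penrose_def .
next
  fix Y assume "A ** Y ** A = A \<and> Y ** A ** Y = Y \<and> transpose (A ** Y) = A ** Y \<and> transpose (Y ** A) = Y ** A"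
  then have "penrose A Y" unfolding penrose_def .
  then show "Y = X" using penrose_unique[OF _ assms] by blast
qed

lemma mm_sub_l: "(A::real^'n^'n) ** (B - C) = A ** B - A ** C"
  by (simp add: matrix_matrix_mult_def vec_eq_iff sum_subtractf algebra_simps)
lemma mm_sub_r: "(B - C) ** (A::real^'n^'n) = B ** A - C ** A"
  by (simp add: matrix_matrix_mult_def vec_eq_iff sum_subtractf algebra_simps)
lemma mm_add_r: "(B + C) ** (A::real^'n^'n) = B ** A + C ** A"
  by (simp add: matrix_matrix_mult_def vec_eq_iff sum.distrib algebra_simps)
lemma transpose_sub: "transpose ((A::real^'n^'n) - B) = transpose A - transpose B"
  by (simp add: transpose_def vec_eq_iff)

lemma qform_entries: "qform_pair M s t = M$s$s - M$s$t - M$t$s + M$t$t"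
  unfolding qform_pair_def indicator_vec_def
  by (simp add: inner_diff_left inner_diff_right matrix_vector_mult_diff_distrib inner_axis' matrix_vector_mult_basis column_def)

lemma qform_sq_nonneg:
  assumes "transpose P = P"
  shows "qform_pair (P ** P) s t \<ge> 0"
proof -
  define b where "b = indicator_vec s - indicator_vec t"
  have "qform_pair (P ** P) s t = b \<bullet> (P *v (P *v b))"
    unfolding qform_pair_def b_def by (simp add: matrix_vector_mul_assoc)
  also have "\<dots> = (b v* P) \<bullet> (P *v b)" by (simp add: dot_lmul_matrix)
  also have "b v* P = P *v b" by (metis assms transpose_matrix_vector)
  finally show ?thesis by simp
qed

lemma pairs_sum:
  fixes g :: "'v::finite \<Rightarrow> 'v \<Rightarrow> real" and S :: "'v set set"
  assumes S: "\<forall>e\<in>S. \<exists>s t. s \<noteq> t \<and> e = {s,t}" and sym: "\<And>i j. g i j = g j i"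
  shows "(\<Sum>i\<in>UNIV. \<Sum>j\<in>UNIV. if {i,j} \<in> S then g i j else 0)
         = 2 * (\<Sum>e\<in>S. g (fst (endpoints e)) (snd (endpoints e)))"
proof -
  have ep: "fst (endpoints e) \<noteq> snd (endpoints e) \<and> e = {fst (endpoints e), snd (endpoints e)}"
    if eS: "e \<in> S" for e
  proof -
    obtain s t where "s \<noteq> t" "e = {s,t}" using bspec[OF S eS] by metis
    then have h: "\<exists>p. fst p \<noteq> snd p \<and> e = {fst p, snd p}" by (intro exI[of _ "(s,t)"]) auto
    show ?thesis unfolding endpoints_def by (rule someI_ex[OF h])
  qed
  define D where "D = {p :: 'v \<times> 'v. {fst p, snd p} \<in> S}"
  have finS: "finite S" by (rule finite_subset[of _ "Pow UNIV"]) auto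
  have sub: "(\<lambda>p. {fst p, snd p}) ` D \<subseteq> S" by (auto simp: D_def)
  have "(\<Sum>i\<in>UNIV. \<Sum>j\<in>UNIV. if {i,j} \<in> S then g i j else 0)
      = (\<Sum>p\<in>UNIV. if {fst p, snd p} \<in> S then g (fst p) (snd p) else 0)"
    by (simp add: sum.cartesian_product UNIV_Times_UNIV[symmetric] case_prod_beta del: UNIV_Times_UNIV)
  also have "\<dots> = (\<Sum>p\<in>D. g (fst p) (snd p))"
    unfolding D_def by (simp add: sum.inter_filter[symmetric])
  also have "\<dots> = (\<Sum>e\<in>S. \<Sum>p\<in>{p\<in>D. {fst p, snd p} = e}. g (fst p) (snd p))"
    by (rule sum.group[OF finite finS sub, symmetric])
  also have "\<dots> = (\<Sum>e\<in>S. 2 * g (fst (endpoints e)) (snd (endpoints e)))"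
  proof (rule sum.cong[OF refl])
    fix e assume e: "e \<in> S"
    define s t where "s = fst (endpoints e)" and "t = snd (endpoints e)"
    have st: "s \<noteq> t" "e = {s,t}" using ep[OF e] s_def t_def by auto
    have stS: "{s,t} \<in> S" using st e by simp
    have "{p\<in>D. {fst p, snd p} = e} = {(s,t),(t,s)}"
    proof (rule set_eqI)
      fix p :: "'v \<times> 'v"
      obtain a b where p: "p = (a,b)" by fastforce
      have "({a,b} \<in> S \<and> {a,b} = {s,t}) \<longleftrightarrow> (a = s \<and> b = t \<or> a = t \<and> b = s)"
        using stS by (auto simp: doubleton_eq_iff insert_commute)
      then show "p \<in> {p\<in>D. {fst p, snd p} = e} \<longleftrightarrow> p \<in> {(s,t),(t,s)}"
        unfolding D_def p st(2)[symmetric] using st(2) by auto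
    qed
    then show "(\<Sum>p\<in>{p\<in>D. {fst p, snd p} = e}. g (fst p) (snd p)) = 2 * g s t"
      using st sym[of t s] by simp
  qed
  finally show ?thesis by (simp add: sum_distrib_left)
qed



lemma endpoints_prop:
  assumes "\<exists>s t. s \<noteq> t \<and> e = {s,t}"
  shows "fst (endpoints e) \<noteq> snd (endpoints e) \<and> e = {fst (endpoints e), snd (endpoints e)}"
proof -
  obtain s t where "s \<noteq> t" "e = {s,t}" using assms by metis
  then have h: "\<exists>p. fst p \<noteq> snd p \<and> e = {fst p, snd p}" by (intro exI[of _ "(s,t)"]) auto
  show ?thesis unfolding endpoints_def by (rule someI_ex[OF h])
qed

definition Jn :: "real^'v^'v" where "Jn = (\<chi> i j. 1 / real CARD('v::finite))"

lemma Jn_transpose: "transpose (Jn :: real^'v::finite^'v) = Jn"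
  by (simp add: transpose_def Jn_def vec_eq_iff)

lemma Jn_Jn: "(Jn :: real^'v::finite^'v) ** Jn = Jn"
  by (simp add: matrix_matrix_mult_def Jn_def vec_eq_iff power2_eq_square)

lemma connected_const:
  assumes "connected_graph E" and "\<And>i j. {i,j} \<in> E \<Longrightarrow> f i = f j"
  shows "f s = f t"
proof -
  have "(\<lambda>x y. {x, y} \<in> E)\<^sup>*\<^sup>* s t" using assms(1) unfolding connected_graph_def by blast
  then show ?thesis
    by (induction rule: rtranclp_induct) (auto dest: assms(2))
qed

context
  fixes E :: "('v::finite) set set" and w :: "'v set \<Rightarrow> real"
  assumes wg: "wgraph E w"
begin

lemma A_sym: "adj_matrix E w $ i $ j = adj_matrix E w $ j $ i"
  by (simp add: adj_matrix_def insert_commute)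

lemma A_nonneg: "adj_matrix E w $ i $ j \<ge> 0"
  using wg by (auto simp: adj_matrix_def wgraph_def less_imp_le)

lemma A_pos: "{i,j} \<in> E \<Longrightarrow> adj_matrix E w $ i $ j > 0"
  using wg by (auto simp: adj_matrix_def wgraph_def)

lemma L_entry: "laplacian E w $ i $ j =
   (if i = j then (\<Sum>k\<in>UNIV. adj_matrix E w $ i $ k) else 0) - adj_matrix E w $ i $ j"
  by (simp add: laplacian_def)

lemma L_row: "(\<Sum>j\<in>UNIV. laplacian E w $ i $ j) = 0"
  by (simp add: L_entry sum_subtractf)

lemma L_sym: "laplacian E w $ i $ j = laplacian E w $ j $ i"
  by (simp add: L_entry A_sym)

lemma L_col: "(\<Sum>i\<in>UNIV. laplacian E w $ i $ j) = 0"
  using L_row[of j] by (simp add: L_sym)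

lemma L_transpose: "transpose (laplacian E w) = laplacian E w"
  by (simp add: transpose_def vec_eq_iff L_sym)

lemma L_Jn: "laplacian E w ** Jn = 0"
  by (simp add: matrix_matrix_mult_def Jn_def vec_eq_iff sum_divide_distrib[symmetric] L_row)

lemma Jn_L: "Jn ** laplacian E w = 0"
  by (simp add: matrix_matrix_mult_def Jn_def vec_eq_iff sum_divide_distrib[symmetric] L_col)

lemma L_row_form: "(\<Sum>j\<in>UNIV. laplacian E w $ i $ j * x j) =
    (\<Sum>j\<in>UNIV. adj_matrix E w $ i $ j * (x i - x j))"
proof -
  have "(\<Sum>j\<in>UNIV. laplacian E w $ i $ j * x j) =
     (\<Sum>j\<in>UNIV. (if i = j then (\<Sum>k\<in>UNIV. adj_matrix E w $ i $ k) * x j else 0) - adj_matrix E w $ i $ j * x j)"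
    by (rule sum.cong) (auto simp: L_entry algebra_simps)
  also have "\<dots> = (\<Sum>k\<in>UNIV. adj_matrix E w $ i $ k) * x i - (\<Sum>j\<in>UNIV. adj_matrix E w $ i $ j * x j)"
    by (simp add: sum_subtractf)
  also have "\<dots> = (\<Sum>j\<in>UNIV. adj_matrix E w $ i $ j * x i) - (\<Sum>j\<in>UNIV. adj_matrix E w $ i $ j * x j)"
    by (simp add: sum_distrib_right)
  also have "\<dots> = (\<Sum>j\<in>UNIV. adj_matrix E w $ i $ j * (x i - x j))"
    by (simp add: sum_subtractf[symmetric] right_diff_distrib)
  finally show ?thesis .
qed

lemma L_kernel:
  assumes "laplacian E w *v x = 0" "{i,j} \<in> E"
  shows "x $ i = x $ j"
proof -
  let ?A = "adj_matrix E w"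
  have r: "(\<Sum>j\<in>UNIV. ?A $ i $ j * (x$i - x$j)) = 0" for i
  proof -
    have "(laplacian E w *v x) $ i = 0" using assms(1) by simp
    then show ?thesis by (simp add: matrix_vector_mult_def L_row_form[of i "\<lambda>j. x$j"])
  qed
  define S1 where "S1 = (\<Sum>i\<in>UNIV. \<Sum>j\<in>UNIV. ?A $ i $ j * x$i * (x$i - x$j))"
  have S1: "S1 = 0"
  proof -
    have "S1 = (\<Sum>i\<in>UNIV. x$i * (\<Sum>j\<in>UNIV. ?A $ i $ j * (x$i - x$j)))"
      unfolding S1_def by (simp add: sum_distrib_left algebra_simps)
    then show ?thesis using r by simp
  qed
  have S2: "(\<Sum>i\<in>UNIV. \<Sum>j\<in>UNIV. ?A $ i $ j * x$j * (x$j - x$i)) = S1"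
    unfolding S1_def by (subst sum.swap) (simp add: A_sym)
  have "(\<Sum>i\<in>UNIV. \<Sum>j\<in>UNIV. ?A $ i $ j * (x$i - x$j)^2) =
        (\<Sum>i\<in>UNIV. \<Sum>j\<in>UNIV. ?A $ i $ j * x$i * (x$i - x$j)) + (\<Sum>i\<in>UNIV. \<Sum>j\<in>UNIV. ?A $ i $ j * x$j * (x$j - x$i))"
    by (simp add: sum.distrib[symmetric] power2_eq_square algebra_simps)
  also have "\<dots> = 0" using S1 S2 S1_def by simp
  finally have z: "(\<Sum>i\<in>UNIV. \<Sum>j\<in>UNIV. ?A $ i $ j * (x$i - x$j)^2) = 0" .
  have nn: "\<And>i j. ?A $ i $ j * (x$i - x$j)^2 \<ge> 0" using A_nonneg by simp
  have "(\<Sum>j\<in>UNIV. ?A $ i $ j * (x$i - x$j)^2) = 0"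
    using z by (subst (asm) sum_nonneg_eq_0_iff) (auto intro: sum_nonneg nn)
  then have "?A $ i $ j * (x$i - x$j)^2 = 0"
    by (subst (asm) sum_nonneg_eq_0_iff) (auto intro: nn)
  then show ?thesis using A_pos[OF assms(2)] by simp
qed

end



context
  fixes E :: "('v::finite) set set" and w :: "'v set \<Rightarrow> real"
  assumes wg: "wgraph E w" and conn: "connected_graph E"
begin

lemma M_ker:
  assumes "(laplacian E w + Jn) *v x = 0"
  shows "x = 0"
proof -
  let ?L = "laplacian E w"
  let ?n = "real CARD('v)"
  have npos: "?n > 0" by simp
  have Jx: "(Jn *v x) $ i = sum (\<lambda>j. x$j) UNIV / ?n" for i
    by (simp add: Jn_def matrix_vector_mult_def sum_divide_distrib)
  have comp: "(?L *v x) $ i + sum (\<lambda>j. x$j) UNIV / ?n = 0" for i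
  proof -
    have "((laplacian E w + Jn) *v x) $ i = 0" using assms by simp
    then have "(?L *v x) $ i + (Jn *v x) $ i = 0" by (simp add: matrix_vector_mult_add_rdistrib)
    then show ?thesis using Jx[of i] by simp
  qed
  have sumL: "(\<Sum>i\<in>UNIV. (?L *v x) $ i) = 0"
  proof -
    have "(\<Sum>i\<in>UNIV. (?L *v x) $ i) = (\<Sum>i\<in>UNIV. \<Sum>j\<in>UNIV. ?L $ i $ j * x $ j)"
      by (simp add: matrix_vector_mult_def)
    also have "\<dots> = (\<Sum>j\<in>UNIV. (\<Sum>i\<in>UNIV. ?L $ i $ j) * x $ j)"
      by (subst sum.swap) (simp add: sum_distrib_right)
    also have "\<dots> = 0" by (simp add: L_col[OF wg])
    finally show ?thesis .
  qed
  have "(\<Sum>i\<in>UNIV. (?L *v x) $ i + sum (\<lambda>j. x$j) UNIV / ?n) = 0"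
    using comp by simp
  then have "sum (\<lambda>j. x$j) UNIV = 0"
    using sumL npos by (simp add: sum.distrib)
  then have Lx: "?L *v x = 0"
    using comp by (simp add: vec_eq_iff)
  have const: "x $ s = x $ t" for s t
    using connected_const[OF conn, of "\<lambda>i. x $ i"] L_kernel[OF wg Lx] by blast
  have xs0: "x $ s = 0" for s
  proof -
    have "sum (\<lambda>j. x$j) UNIV = (\<Sum>j\<in>(UNIV::'v set). x$s)" by (rule sum.cong[OF refl]) (rule const)
    then have "sum (\<lambda>j. x$j) UNIV = ?n * x$s" by simp
    with \<open>sum (\<lambda>j. x$j) UNIV = 0\<close> npos show "x $ s = 0" by simp
  qed
  then show "x = 0" by (simp add: vec_eq_iff)
qed

lemma pinv_props:
  shows "transpose (pinv (laplacian E w)) = pinv (laplacian E w)"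
    and "pinv (laplacian E w) ** Jn = 0"
    and "pinv (laplacian E w) ** laplacian E w ** pinv (laplacian E w) = pinv (laplacian E w)"
proof -
  let ?L = "laplacian E w"
  let ?M = "laplacian E w + Jn"
  have "\<exists>B. B ** ?M = mat 1" using M_ker matrix_left_invertible_ker by blast
  then obtain B where BM: "B ** ?M = mat 1" by blast
  have MB: "?M ** B = mat 1" using BM matrix_left_right_inverse by blast
  have MK: "?M ** Jn = Jn" by (simp add: mm_add_r L_Jn[OF wg] Jn_Jn)
  have KM: "Jn ** ?M = Jn" by (simp add: matrix_add_ldistrib Jn_L[OF wg] Jn_Jn)
  have "B ** Jn = B ** (?M ** Jn)" using MK by simp
  also have "\<dots> = (B ** ?M) ** Jn" by (rule matrix_mul_assoc)
  finally have BK: "B ** Jn = Jn" using BM by simp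
  have "Jn ** B = (Jn ** ?M) ** B" using KM by simp
  also have "\<dots> = Jn ** (?M ** B)" by (rule matrix_mul_assoc[symmetric])
  finally have KB: "Jn ** B = Jn" using MB by simp
  have Leq: "?L = ?M - Jn" by simp
  have "?L ** B = (?M - Jn) ** B" by simp
  also have "\<dots> = mat 1 - Jn" by (simp only: mm_sub_r MB KB)
  finally have LB: "?L ** B = mat 1 - Jn" .
  have "B ** ?L = B ** (?M - Jn)" by simp
  also have "\<dots> = mat 1 - Jn" by (simp only: mm_sub_l BM BK)
  finally have BL: "B ** ?L = mat 1 - Jn" .
  define P where "P = B - Jn"
  have LP: "?L ** P = mat 1 - Jn" unfolding P_def by (simp add: mm_sub_l LB L_Jn[OF wg])
  have PL: "P ** ?L = mat 1 - Jn" unfolding P_def by (simp add: mm_sub_r BL Jn_L[OF wg])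
  have KP: "Jn ** P = 0" unfolding P_def by (simp add: mm_sub_l KB Jn_Jn)
  have T1: "transpose (mat 1 - Jn) = (mat 1 - Jn :: real^'v^'v)"
    by (simp add: transpose_sub Jn_transpose)
  have pen: "penrose ?L P"
    unfolding penrose_def
    by (simp add: LP PL mm_sub_r Jn_L[OF wg] KP T1)
  then have pinvP: "pinv ?L = P" by (rule pinv_eq)
  have LT: "transpose ?L = ?L" by (rule L_transpose[OF wg])
  have pen2: "penrose ?L (transpose P)"
  proof -
    have a: "?L ** transpose P ** ?L = ?L"
    proof -
      have "transpose (?L ** P ** ?L) = ?L ** transpose P ** ?L"
        by (simp add: matrix_transpose_mul LT matrix_mul_assoc)
      then show ?thesis using pen LT unfolding penrose_def by simp
    qed
    have b: "transpose P ** ?L ** transpose P = transpose P"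
    proof -
      have "transpose (P ** ?L ** P) = transpose P ** ?L ** transpose P"
        by (simp add: matrix_transpose_mul LT matrix_mul_assoc)
      then show ?thesis using pen unfolding penrose_def by simp
    qed
    have c: "?L ** transpose P = mat 1 - Jn"
    proof -
      have "transpose (P ** ?L) = ?L ** transpose P"
        by (simp add: matrix_transpose_mul LT)
      then show ?thesis using PL T1 by simp
    qed
    have d: "transpose P ** ?L = mat 1 - Jn"
    proof -
      have "transpose (?L ** P) = transpose P ** ?L"
        by (simp add: matrix_transpose_mul LT)
      then show ?thesis using LP T1 by simp
    qed
    show ?thesis unfolding penrose_def using a b c d T1 by simp
  qed
  have PT: "transpose P = P" using penrose_unique[OF pen2 pen] .
  show "transpose (pinv ?L) = pinv ?L" using PT pinvP by simp
  show "pinv ?L ** Jn = 0" unfolding pinvP P_def by (simp add: mm_sub_r BK Jn_Jn)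
  show "pinv ?L ** ?L ** pinv ?L = pinv ?L" using pen pinvP unfolding penrose_def by simp
qed

end



lemma row_sum_zero:
  fixes P :: "real^'v::finite^'v"
  assumes "P ** Jn = 0"
  shows "(\<Sum>j\<in>UNIV. P $ i $ j) = 0"
proof -
  have "(P ** Jn) $ i $ i = 0" using assms by simp
  then have "(\<Sum>j\<in>UNIV. P $ i $ j) / real CARD('v) = 0"
    by (simp add: matrix_matrix_mult_def Jn_def sum_divide_distrib)
  then show ?thesis by simp
qed

lemma trace_PLP:
  fixes P L :: "real^'v::finite^'v"
  assumes "P ** L ** P = P"
  shows "trace (L ** (P ** P)) = trace P"
proof -
  have "trace (L ** (P ** P)) = trace ((L ** P) ** P)" by (simp add: matrix_mul_assoc)
  also have "\<dots> = trace (P ** (L ** P))" by (rule trace_mul_sym)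
  also have "\<dots> = trace P" using assms by (simp add: matrix_mul_assoc)
  finally show ?thesis .
qed

context
  fixes E :: "('v::finite) set set" and w :: "'v set \<Rightarrow> real"
  assumes wg: "wgraph E w"
begin

lemma trace_form:
  fixes Q :: "real^'v^'v"
  shows "(\<Sum>i\<in>UNIV. \<Sum>j\<in>UNIV. adj_matrix E w $ i $ j * (Q$i$i - Q$i$j - Q$j$i + Q$j$j))
         = 2 * trace (laplacian E w ** Q)"
proof -
  let ?A = "adj_matrix E w"
  define T1 where "T1 = (\<Sum>i\<in>UNIV. \<Sum>j\<in>UNIV. ?A $ i $ j * Q$i$i)"
  define T2 where "T2 = (\<Sum>i\<in>UNIV. \<Sum>j\<in>UNIV. ?A $ i $ j * Q$i$j)"
  define T3 where "T3 = (\<Sum>i\<in>UNIV. \<Sum>j\<in>UNIV. ?A $ i $ j * Q$j$i)"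
  define T4 where "T4 = (\<Sum>i\<in>UNIV. \<Sum>j\<in>UNIV. ?A $ i $ j * Q$j$j)"
  have e: "(\<Sum>i\<in>UNIV. \<Sum>j\<in>UNIV. ?A $ i $ j * (Q$i$i - Q$i$j - Q$j$i + Q$j$j)) = T1 - T2 - T3 + T4"
    unfolding T1_def T2_def T3_def T4_def
    by (simp add: sum.distrib sum_subtractf algebra_simps)
  have "T4 = (\<Sum>j\<in>UNIV. \<Sum>i\<in>UNIV. ?A $ i $ j * Q$j$j)" unfolding T4_def by (rule sum.swap)
  also have "\<dots> = T1" unfolding T1_def by (simp add: A_sym[OF wg])
  finally have T41: "T4 = T1" .
  have "T2 = (\<Sum>j\<in>UNIV. \<Sum>i\<in>UNIV. ?A $ i $ j * Q$i$j)" unfolding T2_def by (rule sum.swap)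
  also have "\<dots> = T3" unfolding T3_def by (simp add: A_sym[OF wg])
  finally have T23: "T2 = T3" .
  have "trace (laplacian E w ** Q) = (\<Sum>i\<in>UNIV. \<Sum>j\<in>UNIV. laplacian E w $ i $ j * Q$j$i)"
    by (simp add: trace_def matrix_matrix_mult_def)
  also have "\<dots> = (\<Sum>i\<in>UNIV. (\<Sum>j\<in>UNIV. ?A $ i $ j) * Q$i$i - (\<Sum>j\<in>UNIV. ?A $ i $ j * Q$j$i))"
  proof (rule sum.cong[OF refl])
    fix i
    have "(\<Sum>j\<in>UNIV. laplacian E w $ i $ j * Q$j$i) =
      (\<Sum>j\<in>UNIV. (if i = j then (\<Sum>k\<in>UNIV. ?A $ i $ k) * Q$j$i else 0) - ?A $ i $ j * Q$j$i)"
      by (rule sum.cong) (auto simp: L_entry[OF wg] algebra_simps)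
    also have "\<dots> = (\<Sum>j\<in>UNIV. ?A $ i $ j) * Q$i$i - (\<Sum>j\<in>UNIV. ?A $ i $ j * Q$j$i)"
      by (simp add: sum_subtractf)
    finally show "(\<Sum>j\<in>UNIV. laplacian E w $ i $ j * Q$j$i) = (\<Sum>j\<in>UNIV. ?A $ i $ j) * Q$i$i - (\<Sum>j\<in>UNIV. ?A $ i $ j * Q$j$i)" .
  qed
  also have "\<dots> = T1 - T3"
    unfolding T1_def T3_def by (simp add: sum_subtractf sum_distrib_right)
  finally have "trace (laplacian E w ** Q) = T1 - T3" .
  then show ?thesis using e T41 T23 by simp
qed

end

theorem corollary4p3:
  fixes E :: "('v::finite) set set" and w :: "'v set \<Rightarrow> real"
  assumes "wgraph E w" and "connected_graph E"
  shows "real CARD('v) * (\<Sum>e\<in>E. w e * (biharm_edge E w e)\<^sup>2) = total_res E w"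
proof -
  let ?L = "laplacian E w"
  let ?A = "adj_matrix E w"
  let ?n = "real CARD('v)"
  define P where "P = pinv ?L"
  have PT: "transpose P = P" unfolding P_def by (rule pinv_props(1)[OF assms])
  have PK: "P ** Jn = 0" unfolding P_def by (rule pinv_props(2)[OF assms])
  have PLP: "P ** ?L ** P = P" unfolding P_def by (rule pinv_props(3)[OF assms])
  have Psym: "P $ i $ j = P $ j $ i" for i j
    using PT by (metis transpose_def vec_lambda_beta)
  have Erep: "\<forall>e\<in>E. \<exists>s t. s \<noteq> t \<and> e = {s,t}" using assms(1) unfolding wgraph_def by blast
  define g where "g i j = w {i,j} * qform_pair (P ** P) i j" for i j
  have gsym: "g i j = g j i" for i j unfolding g_def by (simp add: qform_entries insert_commute)
  have LHS1: "(\<Sum>e\<in>E. w e * (biharm_edge E w e)\<^sup>2) = (\<Sum>e\<in>E. g (fst (endpoints e)) (snd (endpoints e)))"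
  proof (rule sum.cong[OF refl])
    fix e assume e: "e \<in> E"
    define a b where "a = fst (endpoints e)" and "b = snd (endpoints e)"
    have ep: "e = {a, b}"
      using endpoints_prop[OF bspec[OF Erep e]] unfolding a_def b_def by blast
    have nn: "qform_pair (P ** P) a b \<ge> 0"
      by (rule qform_sq_nonneg[OF PT])
    have "w e * (biharm_edge E w e)\<^sup>2 = w {a,b} * (sqrt (qform_pair (P ** P) a b))\<^sup>2"
      unfolding biharm_edge_def biharm_def P_def[symmetric] a_def[symmetric] b_def[symmetric]
      using ep by simp
    also have "\<dots> = g a b" unfolding g_def using nn by simp
    finally show "w e * (biharm_edge E w e)\<^sup>2 = g (fst (endpoints e)) (snd (endpoints e))"
      unfolding a_def b_def .
  qed
  have "2 * (\<Sum>e\<in>E. w e * (biharm_edge E w e)\<^sup>2) = (\<Sum>i\<in>UNIV. \<Sum>j\<in>UNIV. if {i,j} \<in> E then g i j else 0)"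
    unfolding LHS1 using pairs_sum[OF Erep gsym] by simp
  also have "\<dots> = (\<Sum>i\<in>UNIV. \<Sum>j\<in>UNIV. ?A $ i $ j * ((P**P)$i$i - (P**P)$i$j - (P**P)$j$i + (P**P)$j$j))"
    unfolding g_def qform_entries by (intro sum.cong refl) (simp add: adj_matrix_def)
  also have "\<dots> = 2 * trace (?L ** (P ** P))" by (rule trace_form[OF assms(1)])
  also have "\<dots> = 2 * trace P" using trace_PLP[OF PLP] by simp
  finally have LHS: "(\<Sum>e\<in>E. w e * (biharm_edge E w e)\<^sup>2) = trace P" by simp
  define S0 :: "'v set set" where "S0 = {{s, t} | s t. s \<noteq> t}"
  have S0rep: "\<forall>e\<in>S0. \<exists>s t. s \<noteq> t \<and> e = {s,t}" unfolding S0_def by blast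
  have S0iff: "{i,j} \<in> S0 \<longleftrightarrow> i \<noteq> j" for i j
    unfolding S0_def by (auto simp: doubleton_eq_iff)
  have qsym: "qform_pair P i j = qform_pair P j i" for i j by (simp add: qform_entries)
  have "2 * total_res E w = (\<Sum>i\<in>(UNIV::'v set). \<Sum>j\<in>(UNIV::'v set). if {i,j} \<in> S0 then qform_pair P i j else 0)"
    unfolding total_res_def eff_res_def P_def[symmetric] S0_def[symmetric]
    using pairs_sum[of S0 "qform_pair P", OF S0rep qsym] by simp
  also have "\<dots> = (\<Sum>i\<in>(UNIV::'v set). \<Sum>j\<in>(UNIV::'v set). P$i$i - P$i$j - P$j$i + P$j$j)"
    by (intro sum.cong refl) (auto simp: S0iff qform_entries)
  also have "\<dots> = (\<Sum>i\<in>(UNIV::'v set). \<Sum>j\<in>(UNIV::'v set). P$i$i) - (\<Sum>i\<in>(UNIV::'v set). \<Sum>j\<in>(UNIV::'v set). P$i$j)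
       - (\<Sum>i\<in>(UNIV::'v set). \<Sum>j\<in>(UNIV::'v set). P$j$i) + (\<Sum>i\<in>(UNIV::'v set). \<Sum>j\<in>(UNIV::'v set). P$j$j)"
    by (simp add: sum.distrib sum_subtractf)
  finally have e1: "2 * total_res E w = (\<Sum>i\<in>(UNIV::'v set). \<Sum>j\<in>(UNIV::'v set). P$i$i) - (\<Sum>i\<in>(UNIV::'v set). \<Sum>j\<in>(UNIV::'v set). P$i$j)
       - (\<Sum>i\<in>(UNIV::'v set). \<Sum>j\<in>(UNIV::'v set). P$j$i) + (\<Sum>i\<in>(UNIV::'v set). \<Sum>j\<in>(UNIV::'v set). P$j$j)" .
  have "(\<Sum>i\<in>(UNIV::'v set). \<Sum>j\<in>(UNIV::'v set). P$j$i) = (\<Sum>j\<in>(UNIV::'v set). \<Sum>i\<in>(UNIV::'v set). P$j$i)" by (rule sum.swap)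
  also have "\<dots> = 0" by (simp add: row_sum_zero[OF PK])
  finally have z1: "(\<Sum>i\<in>(UNIV::'v set). \<Sum>j\<in>(UNIV::'v set). P$j$i) = 0" .
  have z2: "(\<Sum>i\<in>(UNIV::'v set). \<Sum>j\<in>(UNIV::'v set). P$i$j) = 0" by (simp add: row_sum_zero[OF PK])
  have t1: "(\<Sum>i\<in>(UNIV::'v set). \<Sum>j\<in>(UNIV::'v set). P$i$i) = ?n * trace P"
    by (simp add: trace_def sum_distrib_left)
  have t2: "(\<Sum>i\<in>(UNIV::'v set). \<Sum>j\<in>(UNIV::'v set). P$j$j) = ?n * trace P"
    by (simp add: trace_def)
  have "2 * total_res E w = 2 * (?n * trace P)" using e1 z1 z2 t1 t2 by simp
  then show ?thesis using LHS by simp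
qed


end
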